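(* For $n=1,2,\dots$, let $X^n\sim N(0,\Sigma_n)$ where $\Sigma_n\in\mathbb{R}^{n\times n}$ is positive definite, and let $E_n\in\{0,1\}$ be a random variable jointly distributed with $X^n$. If $\lim_{n\to\infty}\Pr\{E_n=0\}=1$, then \[ \lim_{n\to\infty}\frac1n\Big(h(X^n|E_n=0)-h(X^n)\Big)=0. \]
   Context: $h(\cdot)$ denotes differential entropy; $h(X^n|E_n=0)$ is the differential entropy of the conditional distribution of $X^n$ given $\{E_n=0\}$. *)

theory Defs
  imports "HOL-Probability.Probability" "Jordan_Normal_Form.Determinant"
begin

text \<open>Points of R^n are represented as functions nat => real, and R^n carries the
  product Lebesgue-Borel measure on the index set {..<n}.\<close>

abbreviation Rn :: "nat \<Rightarrow> (nat \<Rightarrow> real) measure" where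
  "Rn n \<equiv> PiM {..<n} (\<lambda>_. lborel)"

definition pos_def_mat :: "nat \<Rightarrow> real mat \<Rightarrow> bool" where
  "pos_def_mat n S \<longleftrightarrow> S \<in> carrier_mat n n \<and> transpose_mat S = S \<and>
     (\<forall>v \<in> carrier_vec n. v \<noteq> 0\<^sub>v n \<longrightarrow> scalar_prod v (S *\<^sub>v v) > 0)"

definition gaussian_density :: "nat \<Rightarrow> real mat \<Rightarrow> (nat \<Rightarrow> real) \<Rightarrow> real" where
  "gaussian_density n S x =
     (let P = (SOME P. P \<in> carrier_mat n n \<and> inverts_mat S P); v = vec n x in
      exp (- (1/2) * scalar_prod v (P *\<^sub>v v)) / sqrt ((2 * pi) ^ n * det S))"

definition gaussian_rv :: "'a measure \<Rightarrow> nat \<Rightarrow> real mat \<Rightarrow> ('a \<Rightarrow> nat \<Rightarrow> real) \<Rightarrow> bool" where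
  "gaussian_rv M n S X \<longleftrightarrow> distributed M (Rn n) X (\<lambda>x. ennreal (gaussian_density n S x))"

definition diff_entropy :: "'a measure \<Rightarrow> nat \<Rightarrow> ('a \<Rightarrow> nat \<Rightarrow> real) \<Rightarrow> real" where
  "diff_entropy M n X = prob_space.entropy M (exp 1) (Rn n) X"

definition cond_diff_entropy :: "'a measure \<Rightarrow> nat \<Rightarrow> ('a \<Rightarrow> nat \<Rightarrow> real) \<Rightarrow> 'a set \<Rightarrow> real" where
  "cond_diff_entropy M n X A = diff_entropy (uniform_measure M A) n X"

end

theory Submission
  imports Defs
begin

lemma abs_le_exp_bound:
  fixes y L :: real
  shows "\<bar>y\<bar> \<le> 4 * L + 4 * exp (- L) * (exp (y/4) + exp (- y/4))"
proof -
  have "\<bar>y\<bar>/4 - L \<le> exp (\<bar>y\<bar>/4 - L)"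
    using exp_ge_add_one_self[of "\<bar>y\<bar>/4 - L"] by linarith
  also have "\<dots> = exp (- L) * exp (\<bar>y\<bar>/4)" by (simp add: exp_add[symmetric])
  also have "exp (\<bar>y\<bar>/4) \<le> exp (y/4) + exp (- y/4)"
    by (cases "y \<ge> 0") (auto intro: add_increasing add_increasing2)
  hence "exp (- L) * exp (\<bar>y\<bar>/4) \<le> exp (- L) * (exp (y/4) + exp (- y/4))"
    by (intro mult_left_mono) auto
  finally show ?thesis by linarith
qed

lemma core_bound:
  fixes P :: "'b measure" and r q :: "'b \<Rightarrow> real" and n :: nat and p :: real
  assumes P: "prob_space P"
    and [measurable]: "r \<in> borel_measurable P" "q \<in> borel_measurable P"
    and r0: "\<And>x. 0 \<le> r x" and r1: "\<And>x. r x \<le> 1/p" and p: "1/2 \<le> p" "p \<le> 1"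
    and rint: "integral\<^sup>L P r = 1"
    and e1: "(\<integral>\<^sup>+x. ennreal (exp (q x / 4)) \<partial>P) \<le> ennreal (sqrt 2 ^ n)"
    and e2: "(\<integral>\<^sup>+x. ennreal (exp (- q x / 4)) \<partial>P) \<le> ennreal (sqrt 2 ^ n)"
  shows "integrable P q" "integrable P (\<lambda>x. r x * q x)"
    "\<bar>(\<integral>x. r x * q x \<partial>P) - (\<integral>x. q x \<partial>P)\<bar> \<le> 16 * n * (1/p - 1) + 8"
proof -
  interpret prob_space P by fact
  have ie1: "integrable P (\<lambda>x. exp (q x / 4))"
    by (rule integrableI_bounded) (use e1 in \<open>auto simp: top.not_eq_extremum intro: le_less_trans\<close>)
  have ie2: "integrable P (\<lambda>x. exp (- q x / 4))"
    by (rule integrableI_bounded) (use e2 in \<open>auto simp: top.not_eq_extremum intro: le_less_trans\<close>)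
  have I1: "(\<integral>x. exp (q x / 4) \<partial>P) \<le> sqrt 2 ^ n"
  proof -
    have "(\<integral>x. exp (q x / 4) \<partial>P) = enn2real (\<integral>\<^sup>+x. ennreal (exp (q x / 4)) \<partial>P)"
      by (rule integral_eq_nn_integral) auto
    also have "\<dots> \<le> enn2real (ennreal (sqrt 2 ^ n))"
      by (rule enn2real_mono[OF e1]) simp
    finally show ?thesis by simp
  qed
  have I2: "(\<integral>x. exp (- q x / 4) \<partial>P) \<le> sqrt 2 ^ n"
  proof -
    have "(\<integral>x. exp (- q x / 4) \<partial>P) = enn2real (\<integral>\<^sup>+x. ennreal (exp (- q x / 4)) \<partial>P)"
      by (rule integral_eq_nn_integral) auto
    also have "\<dots> \<le> enn2real (ennreal (sqrt 2 ^ n))"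
      by (rule enn2real_mono[OF e2]) simp
    finally show ?thesis by simp
  qed
  define L :: real where "L = n * (ln 2 / 2 + 1)"
  have L0: "0 \<le> L" unfolding L_def using ln_ge_zero[of 2] by simp
  define B where "B = (\<lambda>x. 4 * L + 4 * exp (- L) * (exp (q x/4) + exp (- q x/4)))"
  have iB: "integrable P B" unfolding B_def using ie1 ie2 by auto
  have Bge: "\<bar>q x\<bar> \<le> B x" for x unfolding B_def by (rule abs_le_exp_bound)
  show iq: "integrable P q"
    proof (rule Bochner_Integration.integrable_bound[OF iB])
    show "AE x in P. norm (q x) \<le> norm (B x)"
      using Bge by (intro AE_I2) (simp, meson abs_ge_self order_trans)
  qed simp
  have pp: "0 < p" using p by linarith
  have p2: "1/p \<le> 2" using p pp by (simp add: pos_divide_le_eq)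
  have r2: "r x \<le> 2" for x using r1[of x] p2 by linarith
  show irq: "integrable P (\<lambda>x. r x * q x)"
    by (rule Bochner_Integration.integrable_bound[of _ "\<lambda>x. 2 * q x"])
      (use iq r0 r2 in \<open>auto simp: abs_mult intro!: mult_right_mono\<close>)
  define \<delta> where "\<delta> = 1/p - 1"
  have \<delta>0: "0 \<le> \<delta>" unfolding \<delta>_def using p pp by (simp add: field_simps)
  have ir: "integrable P r"
    by (rule Bochner_Integration.integrable_bound[of _ "\<lambda>x. 2::real"]) (use r0 r2 in auto)
  have w1: "\<bar>r x - 1\<bar> \<le> 1" for x using r0[of x] r2[of x] by auto
  have w2: "\<bar>r x - 1\<bar> \<le> 2 * \<delta> - (r x - 1)" for x using r1[of x] \<delta>0 unfolding \<delta>_def by auto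
  have iw: "integrable P (\<lambda>x. \<bar>r x - 1\<bar>)" using ir by auto
  have Iw: "(\<integral>x. \<bar>r x - 1\<bar> \<partial>P) \<le> 2 * \<delta>"
  proof -
    have "(\<integral>x. \<bar>r x - 1\<bar> \<partial>P) \<le> (\<integral>x. 2 * \<delta> - (r x - 1) \<partial>P)"
      by (rule integral_mono) (use iw ir w2 in auto)
    also have "\<dots> = 2 * \<delta>" using ir rint prob_space by (simp add: Bochner_Integration.integral_diff)
    finally show ?thesis .
  qed
  have pw: "\<bar>(r x - 1) * q x\<bar> \<le> 4 * L * \<bar>r x - 1\<bar> + 4 * exp (- L) * (exp (q x/4) + exp (- q x/4))" for x
  proof -
    have "\<bar>(r x - 1) * q x\<bar> = \<bar>r x - 1\<bar> * \<bar>q x\<bar>" by (simp add: abs_mult)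
    also have "\<dots> \<le> \<bar>r x - 1\<bar> * B x" by (rule mult_left_mono[OF Bge]) simp
    also have "\<dots> = \<bar>r x - 1\<bar> * (4 * L) + \<bar>r x - 1\<bar> * (4 * exp (- L) * (exp (q x/4) + exp (- q x/4)))"
      unfolding B_def by (simp add: algebra_simps)
    also have "\<dots> \<le> \<bar>r x - 1\<bar> * (4 * L) + 1 * (4 * exp (- L) * (exp (q x/4) + exp (- q x/4)))"
      by (intro add_left_mono mult_right_mono w1) auto
    finally show ?thesis by (simp add: algebra_simps)
  qed
  have irq1: "integrable P (\<lambda>x. (r x - 1) * q x)"
    using Bochner_Integration.integrable_diff[OF irq iq] by (simp add: left_diff_distrib)
  have "(\<integral>x. r x * q x \<partial>P) - (\<integral>x. q x \<partial>P) = (\<integral>x. r x * q x - q x \<partial>P)"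
    by (rule Bochner_Integration.integral_diff[symmetric, OF irq iq])
  also have "\<dots> = (\<integral>x. (r x - 1) * q x \<partial>P)" by (simp add: left_diff_distrib)
  also have "\<bar>\<dots>\<bar> \<le> (\<integral>x. \<bar>(r x - 1) * q x\<bar> \<partial>P)" by (rule integral_abs_bound)
  also have "\<dots> \<le> (\<integral>x. 4 * L * \<bar>r x - 1\<bar> + 4 * exp (- L) * (exp (q x/4) + exp (- q x/4)) \<partial>P)"
    by (rule integral_mono) (use pw iw ie1 ie2 irq1 in auto)
  also have "\<dots> = 4 * L * (\<integral>x. \<bar>r x - 1\<bar> \<partial>P) + 4 * exp (- L) * ((\<integral>x. exp (q x/4) \<partial>P) + (\<integral>x. exp (- q x/4) \<partial>P))"
    using iw ie1 ie2 by simp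
  also have "\<dots> \<le> 4 * L * (2 * \<delta>) + 4 * exp (- L) * (sqrt 2 ^ n + sqrt 2 ^ n)"
    by (intro add_mono mult_left_mono Iw I1 I2) (use L0 in auto)
  also have "exp (- L) * sqrt 2 ^ n = exp (- real n)"
  proof -
    have "sqrt 2 ^ n = exp (n * (ln 2 / 2))"
    proof -
      have h: "exp (ln 2 / 2) = sqrt 2" by (simp add: ln_sqrt[symmetric])
      have e: "exp (real n * (ln 2 / 2)) = exp (ln 2 / 2) ^ n" by (rule exp_of_nat_mult)
      show ?thesis by (simp only: e h)
    qed
    thus ?thesis unfolding L_def by (simp add: exp_add[symmetric] algebra_simps)
  qed
  hence "4 * exp (- L) * (sqrt 2 ^ n + sqrt 2 ^ n) = 8 * exp (- real n)" by (simp add: algebra_simps)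
  also have "8 * exp (- real n) \<le> 8" by simp
  also have "4 * L * (2 * \<delta>) \<le> 16 * n * \<delta>"
  proof -
    have "ln 2/2 + 1 \<le> (2::real)" using ln_2_less_1 by simp
    hence "L \<le> 2 * real n" unfolding L_def using mult_left_mono[of "ln 2/2 + 1" 2 "real n"] by simp
    hence "L * \<delta> \<le> (2 * real n) * \<delta>" using \<delta>0 by (rule mult_right_mono)
    thus ?thesis by (simp add: algebra_simps)
  qed
  finally show "\<bar>(\<integral>x. r x * q x \<partial>P) - (\<integral>x. q x \<partial>P)\<bar> \<le> 16 * n * (1/p - 1) + 8"
    unfolding \<delta>_def by linarith
qed

lemma lborel_scale_vimage:
  fixes t :: real
  assumes t: "0 < t" and A: "A \<in> sets borel"
  shows "ennreal t * emeasure lborel ((*) t -` A) = emeasure lborel A"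
proof -
  have eq: "lborel = density (distr lborel borel (\<lambda>x. 0 + t * x)) (\<lambda>_. ennreal \<bar>t\<bar>)"
    by (rule lborel_real_affine) (use t in simp)
  have "emeasure lborel A = emeasure (density (distr lborel borel (\<lambda>x. 0 + t * x)) (\<lambda>_. ennreal \<bar>t\<bar>)) A"
    by (rule arg_cong[where f="\<lambda>M. emeasure M A", OF eq])
  also have "\<dots> = ennreal \<bar>t\<bar> * emeasure (distr lborel borel (\<lambda>x. 0 + t * x)) A"
    by (rule emeasure_density_const) (use A in simp)
  also have "emeasure (distr lborel borel (\<lambda>x. 0 + t * x)) A = emeasure lborel ((\<lambda>x. 0 + t * x) -` A \<inter> space lborel)"
    by (rule emeasure_distr) (use A in auto)
  finally show ?thesis using t by (simp add: vimage_def)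
qed

lemma Rn_scale:
  fixes t :: real
  assumes t: "0 < t"
  shows "density (distr (Rn n) (Rn n) (\<lambda>x. \<lambda>i\<in>{..<n}. t * x i)) (\<lambda>_. ennreal (t ^ n)) = Rn n"
proof -
  interpret product_sigma_finite "\<lambda>_::nat. lborel::real measure"
    by (simp add: product_sigma_finite_def sigma_finite_lborel)
  define T where "T = (\<lambda>x::nat\<Rightarrow>real. \<lambda>i\<in>{..<n}. t * x i)"
  have T[measurable]: "T \<in> measurable (Rn n) (Rn n)" unfolding T_def by measurable
  show ?thesis unfolding T_def[symmetric]
  proof (rule PiM_eqI)
    fix A :: "nat \<Rightarrow> real set" assume A: "\<And>i. i \<in> {..<n} \<Longrightarrow> A i \<in> sets lborel"
    have VA: "(*) t -` A i \<in> sets borel" if "i < n" for i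
    proof -
      have "(*) t -` A i \<inter> space borel \<in> sets borel"
      proof -
        have m: "(*) t \<in> measurable borel (borel::real measure)" by measurable
        show ?thesis using measurable_sets[OF m, of "A i"] A[OF that[unfolded lessThan_iff[symmetric]]] by simp
      qed
      thus ?thesis by simp
    qed
    have PA: "Pi\<^sub>E {..<n} A \<in> sets (Rn n)" using A by (intro sets_PiM_I_finite) auto
    have vim: "T -` Pi\<^sub>E {..<n} A \<inter> space (Rn n) = Pi\<^sub>E {..<n} (\<lambda>i. (*) t -` A i)"
      unfolding T_def by (auto simp: space_PiM PiE_def Pi_def extensional_def)
    have "emeasure (density (distr (Rn n) (Rn n) T) (\<lambda>_. ennreal (t ^ n))) (Pi\<^sub>E {..<n} A)
        = ennreal (t ^ n) * emeasure (distr (Rn n) (Rn n) T) (Pi\<^sub>E {..<n} A)"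
      by (rule emeasure_density_const) (use PA in simp)
    also have "emeasure (distr (Rn n) (Rn n) T) (Pi\<^sub>E {..<n} A) = emeasure (Rn n) (Pi\<^sub>E {..<n} (\<lambda>i. (*) t -` A i))"
      by (subst emeasure_distr) (use PA vim in auto)
    also have "\<dots> = (\<Prod>i<n. emeasure lborel ((*) t -` A i))"
      by (rule emeasure_PiM) (use VA in auto)
    also have "ennreal (t ^ n) * (\<Prod>i<n. emeasure lborel ((*) t -` A i)) = (\<Prod>i<n. ennreal t * emeasure lborel ((*) t -` A i))"
      using t by (simp add: prod.distrib ennreal_power)
    also have "\<dots> = (\<Prod>i<n. emeasure lborel (A i))"
      by (rule prod.cong) (use A t lborel_scale_vimage in auto)
    finally show "emeasure (density (distr (Rn n) (Rn n) T) (\<lambda>_. ennreal (t ^ n))) (Pi\<^sub>E {..<n} A) = (\<Prod>i\<in>{..<n}. emeasure lborel (A i))"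
      by (simp add: lessThan_def)
  qed simp_all
qed

lemma nn_integral_Rn_scale:
  fixes t :: real
  assumes t: "0 < t" and h[measurable]: "h \<in> borel_measurable (Rn n)"
  shows "(\<integral>\<^sup>+x. h x \<partial>Rn n) = ennreal (t ^ n) * (\<integral>\<^sup>+x. h (\<lambda>i\<in>{..<n}. t * x i) \<partial>Rn n)"
proof -
  define T where "T = (\<lambda>x::nat\<Rightarrow>real. \<lambda>i\<in>{..<n}. t * x i)"
  have T[measurable]: "T \<in> measurable (Rn n) (Rn n)" unfolding T_def by measurable
  have "(\<integral>\<^sup>+x. h x \<partial>Rn n) = (\<integral>\<^sup>+x. h x \<partial>density (distr (Rn n) (Rn n) T) (\<lambda>_. ennreal (t ^ n)))"
    using Rn_scale[OF t, of n] unfolding T_def by simp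
  also have "\<dots> = (\<integral>\<^sup>+x. ennreal (t ^ n) * h x \<partial>distr (Rn n) (Rn n) T)"
    by (subst nn_integral_density) auto
  also have "\<dots> = (\<integral>\<^sup>+x. ennreal (t ^ n) * h (T x) \<partial>Rn n)"
    by (subst nn_integral_distr) auto
  also have "\<dots> = ennreal (t ^ n) * (\<integral>\<^sup>+x. h (T x) \<partial>Rn n)"
    by (rule nn_integral_cmult) measurable
  finally show ?thesis unfolding T_def .
qed

lemma gauss_scale:
  fixes q :: "(nat \<Rightarrow> real) \<Rightarrow> real" and Z c :: real
  assumes qm[measurable]: "q \<in> borel_measurable (Rn n)"
    and hom: "\<And>t x. 0 < t \<Longrightarrow> q (\<lambda>i\<in>{..<n}. t * x i) = t^2 * q x"
    and int: "(\<integral>\<^sup>+x. ennreal (exp (- q x / 2) / Z) \<partial>Rn n) = 1"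
    and c: "0 < c"
  shows "(\<integral>\<^sup>+x. ennreal (exp (- (c * q x) / 2) / Z) \<partial>Rn n) = ennreal (1 / sqrt c ^ n)"
proof -
  define t where "t = sqrt c"
  have t: "0 < t" "t^2 = c" unfolding t_def using c by auto
  have "1 = (\<integral>\<^sup>+x. ennreal (exp (- q x / 2) / Z) \<partial>Rn n)" using int by simp
  also have "\<dots> = ennreal (t ^ n) * (\<integral>\<^sup>+x. ennreal (exp (- q (\<lambda>i\<in>{..<n}. t * x i) / 2) / Z) \<partial>Rn n)"
    by (rule nn_integral_Rn_scale[OF t(1)]) measurable
  also have "(\<integral>\<^sup>+x. ennreal (exp (- q (\<lambda>i\<in>{..<n}. t * x i) / 2) / Z) \<partial>Rn n)
      = (\<integral>\<^sup>+x. ennreal (exp (- (c * q x) / 2) / Z) \<partial>Rn n)"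
    using hom[OF t(1)] t(2) by simp
  finally have eq: "1 = ennreal (t ^ n) * (\<integral>\<^sup>+x. ennreal (exp (- (c * q x) / 2) / Z) \<partial>Rn n)" .
  have "(\<integral>\<^sup>+x. ennreal (exp (- (c * q x) / 2) / Z) \<partial>Rn n)
      = (ennreal (1 / t ^ n) * ennreal (t ^ n)) * (\<integral>\<^sup>+x. ennreal (exp (- (c * q x) / 2) / Z) \<partial>Rn n)"
    using t by (simp add: ennreal_mult[symmetric])
  also have "\<dots> = ennreal (1 / t ^ n)" by (simp only: mult.assoc eq[symmetric]) simp
  finally show ?thesis unfolding t_def .
qed

lemma gauss_moments:
  fixes q :: "(nat \<Rightarrow> real) \<Rightarrow> real" and Z :: real
  assumes qm[measurable]: "q \<in> borel_measurable (Rn n)"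
    and hom: "\<And>t x. 0 < t \<Longrightarrow> q (\<lambda>i\<in>{..<n}. t * x i) = t^2 * q x"
    and int: "(\<integral>\<^sup>+x. ennreal (exp (- q x / 2) / Z) \<partial>Rn n) = 1"
    and Z: "0 < Z"
  shows "(\<integral>\<^sup>+x. ennreal (exp (- q x / 2) / Z) * ennreal (exp (q x / 4)) \<partial>Rn n) \<le> ennreal (sqrt 2 ^ n)"
    "(\<integral>\<^sup>+x. ennreal (exp (- q x / 2) / Z) * ennreal (exp (- q x / 4)) \<partial>Rn n) \<le> ennreal (sqrt 2 ^ n)"
proof -
  have "(\<integral>\<^sup>+x. ennreal (exp (- q x / 2) / Z) * ennreal (exp (q x / 4)) \<partial>Rn n)
      = (\<integral>\<^sup>+x. ennreal (exp (- ((1/2) * q x) / 2) / Z) \<partial>Rn n)"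
  proof (rule nn_integral_cong)
    fix x
    have "exp (- q x / 2) / Z * exp (q x / 4) = exp (- ((1/2) * q x) / 2) / Z"
      by (simp add: exp_add[symmetric])
    thus "ennreal (exp (- q x / 2) / Z) * ennreal (exp (q x / 4)) = ennreal (exp (- ((1/2) * q x) / 2) / Z)"
      using Z by (simp add: ennreal_mult[symmetric])
  qed
  also have "\<dots> = ennreal (1 / sqrt (1/2) ^ n)" by (rule gauss_scale[OF qm hom int]) auto
  also have "1 / sqrt (1/2) ^ n = sqrt 2 ^ n" by (simp add: real_sqrt_divide power_one_over)
  finally show "(\<integral>\<^sup>+x. ennreal (exp (- q x / 2) / Z) * ennreal (exp (q x / 4)) \<partial>Rn n) \<le> ennreal (sqrt 2 ^ n)"
    by simp
  have "(\<integral>\<^sup>+x. ennreal (exp (- q x / 2) / Z) * ennreal (exp (- q x / 4)) \<partial>Rn n)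
      = (\<integral>\<^sup>+x. ennreal (exp (- ((3/2) * q x) / 2) / Z) \<partial>Rn n)"
  proof (rule nn_integral_cong)
    fix x
    have "exp (- q x / 2) / Z * exp (- q x / 4) = exp (- ((3/2) * q x) / 2) / Z"
      by (simp add: exp_add[symmetric])
    thus "ennreal (exp (- q x / 2) / Z) * ennreal (exp (- q x / 4)) = ennreal (exp (- ((3/2) * q x) / 2) / Z)"
      using Z by (simp add: ennreal_mult[symmetric])
  qed
  also have "\<dots> = ennreal (1 / sqrt (3/2) ^ n)" by (rule gauss_scale[OF qm hom int]) auto
  also have "1 / sqrt (3/2) ^ n \<le> sqrt 2 ^ n"
  proof -
    have "1 \<le> sqrt (3/2::real) ^ n" by (rule one_le_power) simp
    hence "1 / sqrt (3/2) ^ n \<le> 1" by simp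
    also have "1 \<le> sqrt (2::real) ^ n" by (rule one_le_power) simp
    finally show ?thesis .
  qed
  finally show "(\<integral>\<^sup>+x. ennreal (exp (- q x / 2) / Z) * ennreal (exp (- q x / 4)) \<partial>Rn n) \<le> ennreal (sqrt 2 ^ n)"
    by (simp add: ennreal_leI)
qed

lemma cond_density:
  fixes M :: "'a measure" and N :: "'b measure"
  assumes M: "prob_space M" and A: "A \<in> sets M" and pA: "0 < measure M A"
    and X[measurable]: "X \<in> measurable M N"
  shows "\<exists>r. r \<in> borel_measurable N \<and> (\<forall>x. 0 \<le> r x \<and> r x \<le> 1 / measure M A) \<and>
            distr (uniform_measure M A) N X = density (distr M N X) (\<lambda>x. ennreal (r x))"
proof -
  interpret prob_space M by fact
  define p where "p = measure M A"
  have p: "0 < p" using pA unfolding p_def .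
  have eA: "emeasure M A = ennreal p" unfolding p_def by (simp add: emeasure_eq_measure)
  define P where "P = distr M N X"
  define Q where "Q = distr (uniform_measure M A) N X"
  interpret P: prob_space P unfolding P_def by (rule prob_space_distr) simp
  have XU[measurable]: "X \<in> measurable (uniform_measure M A) N"
    using measurable_cong_sets[OF sets_uniform_measure refl, of M A N] X by simp
  have sU: "space (uniform_measure M A) = space M"
    by (rule sets_eq_imp_space_eq) (rule sets_uniform_measure)
  have sP[simp]: "sets P = sets N" "sets Q = sets N" unfolding P_def Q_def by auto
  have spP: "space P = space N" unfolding P_def by simp
  have QB: "emeasure Q B \<le> ennreal (1/p) * emeasure P B" if B: "B \<in> sets N" for B
  proof -
    have XB: "X -` B \<inter> space M \<in> sets M" using B by measurable
    have "emeasure Q B = emeasure (uniform_measure M A) (X -` B \<inter> space M)"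
      unfolding Q_def by (subst emeasure_distr) (use B sU in auto)
    also have "\<dots> = emeasure M (A \<inter> (X -` B \<inter> space M)) / emeasure M A"
      by (rule emeasure_uniform_measure[OF A XB])
    also have "\<dots> \<le> emeasure M (X -` B \<inter> space M) / emeasure M A"
      by (intro divide_right_mono_ennreal emeasure_mono) (use XB in auto)
    also have "\<dots> = ennreal (1/p) * emeasure P B"
      unfolding P_def eA using p B
      by (simp add: emeasure_distr divide_ennreal_def inverse_ennreal mult.commute inverse_eq_divide)
    finally show ?thesis .
  qed
  have ac: "absolutely_continuous P Q"
    unfolding absolutely_continuous_def
  proof
    fix B assume "B \<in> null_sets P"
    hence B: "B \<in> sets N" "emeasure P B = 0" by auto
    have "emeasure Q B \<le> 0" using QB[OF B(1)] B(2) by simp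
    thus "B \<in> null_sets Q" using B by auto
  qed
  define \<rho> where "\<rho> = RN_deriv P Q"
  have \<rho>m[measurable]: "\<rho> \<in> borel_measurable N" unfolding \<rho>_def
    using borel_measurable_RN_deriv[of P Q, unfolded measurable_cong_sets[OF sP(1) refl, of borel]] .
  have Qd: "density P \<rho> = Q" unfolding \<rho>_def by (rule P.density_RN_deriv[OF ac]) simp
  define c where "c = ennreal (1/p)"
  have AEle: "AE x in P. \<rho> x \<le> c"
  proof -
    define B where "B = {x \<in> space N. c < \<rho> x}"
    have B[measurable]: "B \<in> sets N" unfolding B_def c_def by measurable
    have BP[measurable]: "B \<in> sets P" using B by simp
    have \<rho>P[measurable]: "\<rho> \<in> borel_measurable P" unfolding \<rho>_def by (rule borel_measurable_RN_deriv)
    have m1: "(\<lambda>x. c * indicator B x) \<in> borel_measurable P" by measurable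
    have m2: "(\<lambda>x. \<rho> x * indicator B x) \<in> borel_measurable P" by measurable
    have fin: "(\<integral>\<^sup>+x. c * indicator B x \<partial>P) \<noteq> \<infinity>"
      using B by (simp add: c_def nn_integral_cmult_indicator ennreal_mult_eq_top_iff)
    have "AE x in P. \<rho> x * indicator B x \<le> c * indicator B x"
    proof (rule ccontr)
      assume nAE: "\<not> (AE x in P. \<rho> x * indicator B x \<le> c * indicator B x)"
      have "(\<integral>\<^sup>+x. c * indicator B x \<partial>P) < (\<integral>\<^sup>+x. \<rho> x * indicator B x \<partial>P)"
        by (rule nn_integral_less[OF m1 m2 fin _ nAE])
           (auto simp: B_def spP indicator_def intro!: AE_I2 less_imp_le)
      also have "(\<integral>\<^sup>+x. \<rho> x * indicator B x \<partial>P) = emeasure Q B"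
        unfolding Qd[symmetric] using B by (simp add: emeasure_density)
      also have "\<dots> \<le> c * emeasure P B" using QB[OF B] unfolding c_def .
      also have "\<dots> = (\<integral>\<^sup>+x. c * indicator B x \<partial>P)"
        using B by (simp add: nn_integral_cmult_indicator)
      finally show False by simp
    qed
    with AE_space[of P] show ?thesis
    proof eventually_elim
      fix x assume x: "x \<in> space P" "\<rho> x * indicator B x \<le> c * indicator B x"
      show "\<rho> x \<le> c"
      proof (rule ccontr)
        assume "\<not> \<rho> x \<le> c"
        hence "x \<in> B" using x(1) unfolding B_def spP by auto
        thus False using x(2) \<open>\<not> \<rho> x \<le> c\<close> by simp
      qed
    qed
  qed
  define r where "r = (\<lambda>x. min (enn2real (\<rho> x)) (1/p))"
  have rm[measurable]: "r \<in> borel_measurable N" unfolding r_def by measurable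
  have "density P \<rho> = density P (\<lambda>x. ennreal (r x))"
  proof (rule density_cong)
    show "AE x in P. \<rho> x = ennreal (r x)"
      using AEle proof eventually_elim
      fix x assume "\<rho> x \<le> c"
      then obtain y where "\<rho> x = ennreal y" "0 \<le> y" "y \<le> 1/p"
        unfolding c_def using p by (cases "\<rho> x") (auto simp: ennreal_le_iff2 top_unique)
      thus "\<rho> x = ennreal (r x)" unfolding r_def by simp
    qed
  next
    show "\<rho> \<in> borel_measurable P" unfolding \<rho>_def by (rule borel_measurable_RN_deriv)
  next
    have "(\<lambda>x. ennreal (r x)) \<in> borel_measurable N" by measurable
    thus "(\<lambda>x. ennreal (r x)) \<in> borel_measurable P"
      by (simp only: measurable_cong_sets[OF sP(1) refl, of borel])
  qed
  hence "Q = density P (\<lambda>x. ennreal (r x))" using Qd by simp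
  moreover have "\<forall>x. 0 \<le> r x \<and> r x \<le> 1 / p" unfolding r_def using p by auto
  ultimately show ?thesis using rm unfolding p_def[symmetric] P_def[symmetric] Q_def[symmetric] by blast
qed

lemma pd_inverse:
  assumes pd: "pos_def_mat n S"
  shows "\<exists>P. P \<in> carrier_mat n n \<and> inverts_mat S P"
proof -
  have S: "S \<in> carrier_mat n n" using pd unfolding pos_def_mat_def by auto
  have "det S \<noteq> 0"
  proof
    assume "det S = 0"
    then obtain v where v: "v \<in> carrier_vec n" "v \<noteq> 0\<^sub>v n" "S *\<^sub>v v = 0\<^sub>v n"
      using det_0_iff_vec_prod_zero[OF S] by auto
    have "scalar_prod v (S *\<^sub>v v) = 0" using v by simp
    moreover have "scalar_prod v (S *\<^sub>v v) > 0" using pd v unfolding pos_def_mat_def by auto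
    ultimately show False by simp
  qed
  from det_non_zero_imp_unit[OF S this, of "()"]
  obtain B where "B \<in> carrier_mat n n" "S * B = 1\<^sub>m n"
    by (auto simp: Units_def ring_mat_def)
  thus ?thesis unfolding inverts_mat_def using S by auto
qed

lemma qform:
  fixes Pm :: "real mat"
  assumes Pm: "Pm \<in> carrier_mat n n"
  shows "scalar_prod (vec n x) (Pm *\<^sub>v vec n x) = (\<Sum>i<n. x i * (\<Sum>j<n. Pm $$ (i, j) * x j))"
  using Pm unfolding scalar_prod_def
  by (auto simp: atLeast0LessThan mult_mat_vec_def row_def scalar_prod_def intro!: sum.cong)

lemma qform_hom:
  fixes Pm :: "real mat"
  assumes Pm: "Pm \<in> carrier_mat n n"
  shows "scalar_prod (vec n (\<lambda>i\<in>{..<n}. t * x i)) (Pm *\<^sub>v vec n (\<lambda>i\<in>{..<n}. t * x i))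
       = t^2 * scalar_prod (vec n x) (Pm *\<^sub>v vec n x)"
  unfolding qform[OF Pm]
  by (auto simp: sum_distrib_left power2_eq_square algebra_simps intro!: sum.cong)

lemma qform_measurable:
  fixes Pm :: "real mat"
  assumes Pm: "Pm \<in> carrier_mat n n"
  shows "(\<lambda>x. scalar_prod (vec n x) (Pm *\<^sub>v vec n x)) \<in> borel_measurable (Rn n)"
proof -
  have c: "(\<lambda>x. x i) \<in> borel_measurable (Rn n)" if "i < n" for i
    using measurable_component_singleton[of i "{..<n}" "\<lambda>_. lborel"] that by simp
  have "(\<lambda>x. (\<Sum>i<n. x i * (\<Sum>j<n. Pm $$ (i, j) * x j))) \<in> borel_measurable (Rn n)"
    by (intro borel_measurable_sum borel_measurable_times borel_measurable_const c) auto
  thus ?thesis unfolding qform[OF Pm] .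
qed

lemma entropy_formula:
  fixes S :: "'b measure" and M :: "'a measure" and f g :: "'b \<Rightarrow> real"
  assumes S: "sigma_finite_measure S" and M: "prob_space M"
    and fm[measurable]: "f \<in> borel_measurable S" and f0: "\<And>x. 0 \<le> f x"
    and gm[measurable]: "g \<in> borel_measurable S" and g0: "\<And>x. 0 \<le> g x"
    and D: "distr M S X = density S (\<lambda>x. ennreal (f x * g x))"
  shows "prob_space.entropy M (exp 1) S X = - (\<integral>x. g x * ln (f x * g x) \<partial>density S (\<lambda>x. ennreal (f x)))"
proof -
  interpret sigma_finite_measure S by fact
  have "prob_space.entropy M (exp 1) S X = - KL_divergence (exp 1) S (distr M S X)"
    by (rule prob_space.entropy_def[OF M])
  also have "KL_divergence (exp 1) S (distr M S X) = (\<integral>x. (f x * g x) * log (exp 1) (f x * g x) \<partial>S)"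
    unfolding D by (rule KL_density) (auto simp: f0 g0)
  also have "\<dots> = (\<integral>x. g x * ln (f x * g x) \<partial>density S (\<lambda>x. ennreal (f x)))"
    by (subst integral_density) (auto simp: f0 log_ln[symmetric] ac_simps)
  finally show ?thesis by simp
qed

lemma rlnr_bounds:
  fixes r :: real
  assumes "0 \<le> r" "r \<le> 2"
  shows "-1 \<le> r * ln r" "r * ln r \<le> 2"
proof -
  have "-1 \<le> r * ln r \<and> r * ln r \<le> 2"
  proof (cases "r = 0")
    case False
    hence r: "0 < r" using assms by simp
    have l1: "ln r \<le> r - 1" using ln_le_minus_one[OF r] .
    have "ln (1/r) \<le> 1/r - 1" using ln_le_minus_one[of "1/r"] r by simp
    hence l2: "1 - 1/r \<le> ln r" using r by (simp add: ln_div)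
    have "r * (1 - 1/r) \<le> r * ln r" by (rule mult_left_mono[OF l2]) (use r in simp)
    hence a: "r - 1 \<le> r * ln r" using r by (simp add: algebra_simps)
    have "r * ln r \<le> r * (r - 1)" by (rule mult_left_mono[OF l1]) (use r in simp)
    also have "\<dots> \<le> 2"
    proof -
      have "(r - 2) * (r + 1) \<le> 0" by (rule mult_nonpos_nonneg) (use assms in auto)
      thus ?thesis by (simp add: algebra_simps)
    qed
    finally show ?thesis using a r by simp
  qed simp
  thus "-1 \<le> r * ln r" "r * ln r \<le> 2" by auto
qed

lemma half_abs: "\<bar>(1/2) * a - b\<bar> \<le> (1/2) * \<bar>a\<bar> + \<bar>b::real\<bar>" by arith

lemma main_bound:
  fixes M :: "'a measure" and X :: "'a \<Rightarrow> nat \<Rightarrow> real" and S :: "real mat"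
  assumes M: "prob_space M" and pd: "pos_def_mat n S" and G: "gaussian_rv M n S X"
    and A: "A \<in> sets M" and pA: "1/2 \<le> measure M A"
  shows "\<bar>cond_diff_entropy M n X A - diff_entropy M n X\<bar> \<le> 8 * n * (1 / measure M A - 1) + 6"
proof -
  interpret prob_space M by fact
  interpret product_sigma_finite "\<lambda>_::nat. lborel::real measure"
    by (simp add: product_sigma_finite_def sigma_finite_lborel)
  have SF: "sigma_finite_measure (Rn n)" by (rule sigma_finite) simp
  define p where "p = measure M A"
  have p: "1/2 \<le> p" "p \<le> 1" unfolding p_def using pA by auto
  define Pm where "Pm = (SOME P. P \<in> carrier_mat n n \<and> inverts_mat S P)"
  have Pm: "Pm \<in> carrier_mat n n" unfolding Pm_def using someI_ex[OF pd_inverse[OF pd]] by blast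
  define q where "q = (\<lambda>x. scalar_prod (vec n x) (Pm *\<^sub>v vec n x))"
  have qm[measurable]: "q \<in> borel_measurable (Rn n)" unfolding q_def by (rule qform_measurable[OF Pm])
  have hom: "\<And>t x. 0 < t \<Longrightarrow> q (\<lambda>i\<in>{..<n}. t * x i) = t^2 * q x" unfolding q_def by (rule qform_hom[OF Pm])
  define Z where "Z = sqrt ((2 * pi) ^ n * det S)"
  define f where "f = (\<lambda>x. exp (- q x / 2) / Z)"
  have feq: "gaussian_density n S x = f x" for x
    unfolding gaussian_density_def f_def q_def Pm_def Z_def Let_def by simp
  have fm[measurable]: "f \<in> borel_measurable (Rn n)" unfolding f_def by measurable
  have D: "distributed M (Rn n) X (\<lambda>x. ennreal (f x))"
    using G unfolding gaussian_rv_def feq .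
  have Xm[measurable]: "X \<in> measurable M (Rn n)" using D by (rule distributed_measurable)
  define P where "P = distr M (Rn n) X"
  have Pd: "P = density (Rn n) (\<lambda>x. ennreal (f x))" unfolding P_def using D by (simp add: distributed_def)
  interpret P: prob_space P unfolding P_def by (rule prob_space_distr) simp
  have sP[simp]: "sets P = sets (Rn n)" "space P = space (Rn n)" unfolding P_def by auto
  have int1: "(\<integral>\<^sup>+x. ennreal (f x) \<partial>Rn n) = 1"
  proof -
    have "1 = emeasure P (space P)" using P.emeasure_space_1 by simp
    also have "\<dots> = (\<integral>\<^sup>+x. ennreal (f x) * indicator (space (Rn n)) x \<partial>Rn n)"
      unfolding Pd by (subst emeasure_density) auto
    also have "\<dots> = (\<integral>\<^sup>+x. ennreal (f x) \<partial>Rn n)"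
      by (rule nn_integral_cong) auto
    finally show ?thesis by simp
  qed
  have Z: "0 < Z"
  proof (rule ccontr)
    assume "\<not> 0 < Z"
    hence "f x \<le> 0" for x unfolding f_def by (simp add: divide_nonneg_nonpos)
    hence "(\<lambda>x. ennreal (f x)) = (\<lambda>x. 0)" by (simp add: ennreal_neg fun_eq_iff)
    hence "(\<integral>\<^sup>+x. ennreal (f x) \<partial>Rn n) = 0" by simp
    thus False using int1 by simp
  qed
  have f0: "0 \<le> f x" for x unfolding f_def using Z by simp
  have fpos: "0 < f x" for x unfolding f_def using Z by simp
  have int1': "(\<integral>\<^sup>+x. ennreal (exp (- q x / 2) / Z) \<partial>Rn n) = 1" using int1 unfolding f_def .
  note mom = gauss_moments[OF qm hom int1' Z]
  have e1: "(\<integral>\<^sup>+x. ennreal (exp (q x / 4)) \<partial>P) \<le> ennreal (sqrt 2 ^ n)"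
    unfolding Pd by (subst nn_integral_density) (use mom(1) in \<open>auto simp: f_def\<close>)
  have e2: "(\<integral>\<^sup>+x. ennreal (exp (- q x / 4)) \<partial>P) \<le> ennreal (sqrt 2 ^ n)"
    unfolding Pd by (subst nn_integral_density) (use mom(2) in \<open>auto simp: f_def\<close>)
  have pA0: "0 < measure M A" using pA by simp
  obtain r where rm[measurable]: "r \<in> borel_measurable (Rn n)"
    and r01: "\<forall>x. 0 \<le> r x \<and> r x \<le> 1 / p"
    and Qd: "distr (uniform_measure M A) (Rn n) X = density P (\<lambda>x. ennreal (r x))"
    using cond_density[OF M A pA0 Xm] unfolding p_def P_def by blast
  have r0: "\<And>x. 0 \<le> r x" and r1: "\<And>x. r x \<le> 1/p" using r01 by auto
  have eA: "emeasure M A = ennreal p" unfolding p_def by (simp add: emeasure_eq_measure)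
  have UP: "prob_space (uniform_measure M A)"
    by (rule prob_space_uniform_measure) (use eA p in auto)
  have XU: "X \<in> measurable (uniform_measure M A) (Rn n)"
    using measurable_cong_sets[OF sets_uniform_measure refl, of M A "Rn n"] Xm by simp
  have QP: "prob_space (distr (uniform_measure M A) (Rn n) X)"
    by (rule prob_space.prob_space_distr[OF UP XU])
  have rP[measurable]: "r \<in> borel_measurable P" using rm by (simp only: measurable_cong_sets[OF sP(1) refl])
  have qP[measurable]: "q \<in> borel_measurable P" using qm by (simp only: measurable_cong_sets[OF sP(1) refl])
  have psp: "measure P (space (Rn n)) = 1" using P.prob_space by simp
  have rint: "integral\<^sup>L P r = 1"
  proof -
    have "1 = emeasure (distr (uniform_measure M A) (Rn n) X) (space (Rn n))"
      using prob_space.emeasure_space_1[OF QP] by simp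
    also have "\<dots> = (\<integral>\<^sup>+x. ennreal (r x) * indicator (space P) x \<partial>P)"
      unfolding Qd by (subst emeasure_density) auto
    also have "\<dots> = (\<integral>\<^sup>+x. ennreal (r x) \<partial>P)" by (rule nn_integral_cong) auto
    finally have "(\<integral>\<^sup>+x. ennreal (r x) \<partial>P) = 1" by simp
    thus ?thesis by (subst integral_eq_nn_integral) (auto simp: r0)
  qed
  note cb = core_bound[OF P.prob_space_axioms rP qP r0 r1 p rint e1 e2]
  have Qd2: "distr (uniform_measure M A) (Rn n) X = density (Rn n) (\<lambda>x. ennreal (f x * r x))"
    unfolding Qd Pd by (subst density_density_eq) (auto simp: ennreal_mult f0 r0)
  have hQ: "cond_diff_entropy M n X A = - (\<integral>x. r x * ln (f x * r x) \<partial>P)"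
    unfolding cond_diff_entropy_def diff_entropy_def Pd
    by (rule entropy_formula[OF SF UP fm f0 rm r0 Qd2])
  have hP: "diff_entropy M n X = - (\<integral>x. 1 * ln (f x * 1) \<partial>P)"
    unfolding diff_entropy_def Pd
    by (rule entropy_formula[OF SF M fm f0]) (use D in \<open>auto simp: distributed_def\<close>)
  have lnf: "ln (f x) = - q x / 2 - ln Z" for x unfolding f_def using Z by (simp add: ln_div)
  have pw: "r x * ln (f x * r x) = - (1/2) * (r x * q x) - ln Z * r x + r x * ln (r x)" for x
  proof (cases "r x = 0")
    case False
    hence "0 < r x" using r0[of x] by simp
    hence "ln (f x * r x) = ln (f x) + ln (r x)" using fpos[of x] by (simp add: ln_mult)
    hence e: "ln (f x * r x) = - q x / 2 - ln Z + ln (r x)" unfolding lnf .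
    show ?thesis unfolding e by (simp add: algebra_simps)
  qed simp
  have p2: "1/p \<le> 2" using p by (simp add: pos_divide_le_eq)
  have r2: "r x \<le> 2" for x using r1[of x] p2 by linarith
  have rl: "-1 \<le> r x * ln (r x)" "r x * ln (r x) \<le> 2" for x using rlnr_bounds[OF r0 r2] by auto
  have rl3: "- (r x * ln (r x)) \<le> 2" for x using rl(1)[of x] by linarith
  have irl: "integrable P (\<lambda>x. r x * ln (r x))"
    by (rule Bochner_Integration.integrable_bound[of _ "\<lambda>x. 2::real"]) (use rl rl3 in \<open>auto simp: abs_le_iff\<close>)
  have ir: "integrable P r"
    by (rule Bochner_Integration.integrable_bound[of _ "\<lambda>x. 2::real"]) (use r0 r2 in auto)
  have Irl: "\<bar>\<integral>x. r x * ln (r x) \<partial>P\<bar> \<le> 2"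
  proof -
    have "(\<integral>x. r x * ln (r x) \<partial>P) \<le> (\<integral>x. 2 \<partial>P)" by (rule integral_mono) (use irl rl in auto)
    moreover have "(\<integral>x. -1 \<partial>P) \<le> (\<integral>x. r x * ln (r x) \<partial>P)" by (rule integral_mono) (use irl rl in auto)
    ultimately show ?thesis by (simp add: psp)
  qed
  have IQ: "(\<integral>x. r x * ln (f x * r x) \<partial>P) = - (1/2) * (\<integral>x. r x * q x \<partial>P) - ln Z + (\<integral>x. r x * ln (r x) \<partial>P)"
    unfolding pw using cb(2) ir irl rint by simp
  have IP: "(\<integral>x. 1 * ln (f x * 1) \<partial>P) = - (1/2) * (\<integral>x. q x \<partial>P) - ln Z"
  proof -
    have "(\<integral>x. 1 * ln (f x * 1) \<partial>P) = (\<integral>x. - (1/2) * q x - ln Z \<partial>P)" by (simp add: lnf)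
    also have "\<dots> = - (1/2) * (\<integral>x. q x \<partial>P) - ln Z"
      using cb(1) by (simp add: psp Bochner_Integration.integral_diff)
    finally show ?thesis .
  qed
  have "cond_diff_entropy M n X A - diff_entropy M n X
      = (1/2) * ((\<integral>x. r x * q x \<partial>P) - (\<integral>x. q x \<partial>P)) - (\<integral>x. r x * ln (r x) \<partial>P)"
    unfolding hQ hP IQ IP by (simp add: algebra_simps)
  also have "\<bar>\<dots>\<bar> \<le> (1/2) * \<bar>(\<integral>x. r x * q x \<partial>P) - (\<integral>x. q x \<partial>P)\<bar> + \<bar>\<integral>x. r x * ln (r x) \<partial>P\<bar>"
    by (rule half_abs)
  also have "\<dots> \<le> (1/2) * (16 * n * (1/p - 1) + 8) + 2"
    by (intro add_mono mult_left_mono cb(3) Irl) auto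
  finally show ?thesis unfolding p_def by (simp add: algebra_simps)
qed


theorem lemma13:
  fixes M :: "nat \<Rightarrow> 'a measure"
    and X :: "nat \<Rightarrow> 'a \<Rightarrow> nat \<Rightarrow> real"
    and E :: "nat \<Rightarrow> 'a \<Rightarrow> nat"
    and \<Sigma> :: "nat \<Rightarrow> real mat"
  assumes "\<And>n. n \<ge> 1 \<Longrightarrow> prob_space (M n)"
    and "\<And>n. n \<ge> 1 \<Longrightarrow> pos_def_mat n (\<Sigma> n)"
    and "\<And>n. n \<ge> 1 \<Longrightarrow> gaussian_rv (M n) n (\<Sigma> n) (X n)"
    and "\<And>n. n \<ge> 1 \<Longrightarrow> E n \<in> measurable (M n) (count_space UNIV)"
    and "\<And>n \<omega>. n \<ge> 1 \<Longrightarrow> \<omega> \<in> space (M n) \<Longrightarrow> E n \<omega> \<in> {0, 1}"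
    and "(\<lambda>n. measure (M n) {\<omega> \<in> space (M n). E n \<omega> = 0}) \<longlonglongrightarrow> 1"
  shows "(\<lambda>n. (cond_diff_entropy (M n) n (X n) {\<omega> \<in> space (M n). E n \<omega> = 0}
                 - diff_entropy (M n) n (X n)) / real n) \<longlonglongrightarrow> 0"
proof -
  define A where "A = (\<lambda>n. {\<omega> \<in> space (M n). E n \<omega> = 0})"
  define p where "p = (\<lambda>n. measure (M n) (A n))"
  have pl: "p \<longlonglongrightarrow> 1" using assms(6) unfolding p_def A_def .
  have ev1: "eventually (\<lambda>n. 1/2 < p n) sequentially"
    by (rule order_tendstoD(1)[OF pl]) simp
  have ev: "eventually (\<lambda>n. 1/2 < p n \<and> 1 \<le> n) sequentially"
    using ev1 eventually_ge_at_top[of "1::nat"] by eventually_elim auto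
  have As: "A n \<in> sets (M n)" if "1 \<le> n" for n
  proof -
    have "A n = E n -` {0} \<inter> space (M n)" unfolding A_def by auto
    thus ?thesis using measurable_sets[OF assms(4)[OF that], of "{0}"] by simp
  qed
  define g where "g = (\<lambda>n. 8 * (1 / p n - 1) + 6 / real n)"
  have gl: "g \<longlonglongrightarrow> 8 * (1 / 1 - 1) + 0" unfolding g_def
    by (intro tendsto_intros pl lim_const_over_n) simp
  have "eventually (\<lambda>n. norm ((cond_diff_entropy (M n) n (X n) (A n) - diff_entropy (M n) n (X n)) / real n) \<le> g n) sequentially"
    using ev
  proof eventually_elim
    case (elim n)
    hence n: "1 \<le> n" "1/2 \<le> p n" by auto
    have b: "\<bar>cond_diff_entropy (M n) n (X n) (A n) - diff_entropy (M n) n (X n)\<bar> \<le> 8 * n * (1 / p n - 1) + 6"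
      using main_bound[OF assms(1)[OF n(1)] assms(2)[OF n(1)] assms(3)[OF n(1)] As[OF n(1)]] n(2)
      unfolding p_def by simp
    have np: "0 < real n" using n by simp
    have "norm ((cond_diff_entropy (M n) n (X n) (A n) - diff_entropy (M n) n (X n)) / real n)
        = \<bar>cond_diff_entropy (M n) n (X n) (A n) - diff_entropy (M n) n (X n)\<bar> / real n" by simp
    also have "\<dots> \<le> (8 * n * (1 / p n - 1) + 6) / real n" by (rule divide_right_mono[OF b]) simp
    also have "\<dots> = g n" unfolding g_def using np by (simp add: field_simps)
    finally show ?case .
  qed
  moreover have "g \<longlonglongrightarrow> 0" using gl by simp
  ultimately have "(\<lambda>n. (cond_diff_entropy (M n) n (X n) (A n) - diff_entropy (M n) n (X n)) / real n) \<longlonglongrightarrow> 0"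
    by (rule Lim_null_comparison)
  thus ?thesis unfolding A_def .
qed

end
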